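(* Let $\mathcal{P}=(V_1,\dots,V_k)$ be an $\varepsilon$-regular $k$-partition of an $n$-vertex graph $G$, and let $d_{ij}:=\frac{w_G(V_i,V_j)}{|V_i||V_j|}$. For each $F\subseteq\binom{[k]}{2}$ and each $ab\in F$, all but at most $2k\sqrt{\varepsilon}\,|V_a||V_b|$ pairs $(x_a,x_b)\in V_a\times V_b$ satisfy $$\sum_g\hom_g(F,G)=\Big(\prod_{i\in[k]\setminus\{a,b\}}|V_i|\Big)\Big(w_G(x_a,x_b)\prod_{ij\in F\setminus\{ab\}}d_{ij}\ \pm\ \sqrt{\varepsilon}\,|F|\Big),$$ where the sum is over all $\mathcal{P}$-maps $g\colon[k]\to V(G)$ with $g(a)=x_a$ and $g(b)=x_b$, and "$\pm c$" means that the two sides differ by at most $\big(\prod_{i\ne a,b}|V_i|\big)c$.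
   Context: For a graph $G$, $w_G(u,v)=1$ if $uv\in E(G)$ and $0$ otherwise; $w_G(U,V)=\sum_{u\in U}\sum_{v\in V}w_G(u,v)$. A bipartite graph $(V_1,V_2,E)$ with density $d=w(V_1,V_2)/(|V_1||V_2|)$ is $\varepsilon$-homogeneous if for all $W_1\subseteq V_1$, $W_2\subseteq V_2$: $|w(W_1,W_2)-d|W_1||W_2||\le\varepsilon|V_1||V_2|$. An $\varepsilon$-regular $k$-partition of an $n$-vertex graph $G$ is a partition $V_1,\dots,V_k$ of $V(G)$ with $|V_i|\in\{\lfloor n/k\rfloor,\lceil n/k\rceil\}$ such that for all $i\ne j$ the bipartite graph between $V_i,V_j$ formed by edges of $G$ is $\varepsilon$-homogeneous. A graph $F$ on vertex set $[k]$ is identified with its edge set $F\subseteq\binom{[k]}{2}$. A $\mathcal{P}$-map is a function $g\colon[k]\to V(G)$ with $g(i)\in V_i$ for all $i$, and $\hom_g(F,G)=\prod_{ij\in F}w_G(g(i),g(j))$. *)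

theory Defs
  imports Complex_Main "HOL-Library.FuncSet"
begin

definition graph :: "'v set \<Rightarrow> ('v \<Rightarrow> 'v \<Rightarrow> bool) \<Rightarrow> bool" where
  "graph V E \<longleftrightarrow> finite V \<and> (\<forall>u v. E u v \<longrightarrow> E v u) \<and> (\<forall>u. \<not> E u u)
     \<and> (\<forall>u v. E u v \<longrightarrow> u \<in> V \<and> v \<in> V)"

definition w :: "('v \<Rightarrow> 'v \<Rightarrow> bool) \<Rightarrow> 'v \<Rightarrow> 'v \<Rightarrow> real" where
  "w E u v = (if E u v then 1 else 0)"

definition wset :: "('v \<Rightarrow> 'v \<Rightarrow> bool) \<Rightarrow> 'v set \<Rightarrow> 'v set \<Rightarrow> real" where
  "wset E U W = (\<Sum>u\<in>U. \<Sum>v\<in>W. w E u v)"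

definition density :: "('v \<Rightarrow> 'v \<Rightarrow> bool) \<Rightarrow> 'v set \<Rightarrow> 'v set \<Rightarrow> real" where
  "density E V1 V2 = wset E V1 V2 / (real (card V1) * real (card V2))"

definition homogeneous :: "real \<Rightarrow> ('v \<Rightarrow> 'v \<Rightarrow> bool) \<Rightarrow> 'v set \<Rightarrow> 'v set \<Rightarrow> bool" where
  "homogeneous \<epsilon> E V1 V2 \<longleftrightarrow>
     (\<forall>W1 W2. W1 \<subseteq> V1 \<longrightarrow> W2 \<subseteq> V2 \<longrightarrow>
        \<bar>wset E W1 W2 - density E V1 V2 * real (card W1) * real (card W2)\<bar>
          \<le> \<epsilon> * real (card V1) * real (card V2))"

definition regular_partition :: "real \<Rightarrow> nat \<Rightarrow> (nat \<Rightarrow> 'v set) \<Rightarrow> 'v set \<Rightarrow> ('v \<Rightarrow> 'v \<Rightarrow> bool) \<Rightarrow> bool" where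
  "regular_partition \<epsilon> k P V E \<longleftrightarrow>
     (\<Union>i\<in>{1..k}. P i) = V \<and>
     (\<forall>i\<in>{1..k}. \<forall>j\<in>{1..k}. i \<noteq> j \<longrightarrow> P i \<inter> P j = {}) \<and>
     (\<forall>i\<in>{1..k}. card (P i) = card V div k \<or> card (P i) = (card V + k - 1) div k) \<and>
     (\<forall>i\<in>{1..k}. \<forall>j\<in>{1..k}. i \<noteq> j \<longrightarrow> homogeneous \<epsilon> E (P i) (P j))"

definition Pmaps :: "nat \<Rightarrow> (nat \<Rightarrow> 'v set) \<Rightarrow> (nat \<Rightarrow> 'v) set" where
  "Pmaps k P = (\<Pi>\<^sub>E i\<in>{1..k}. P i)"

definition graph_on :: "nat \<Rightarrow> (nat \<times> nat) set \<Rightarrow> bool" where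
  "graph_on k F \<longleftrightarrow> F \<subseteq> {(i,j). 1 \<le> i \<and> i < j \<and> j \<le> k}"

definition homg :: "(nat \<times> nat) set \<Rightarrow> ('v \<Rightarrow> 'v \<Rightarrow> bool) \<Rightarrow> (nat \<Rightarrow> 'v) \<Rightarrow> real" where
  "homg F E g = (\<Prod>(i,j)\<in>F. w E (g i) (g j))"

end

theory Submission
  imports Defs
begin

lemma sum_PiE_split:
  assumes "j \<in> J"
  shows "(\<Sum>g\<in>PiE J P. f g) = (\<Sum>h\<in>PiE (J - {j}) P. \<Sum>y\<in>P j. f (h(j:=y)))"
proof -
  have "(\<Sum>h\<in>PiE (J - {j}) P. \<Sum>y\<in>P j. f (h(j:=y))) = (\<Sum>(h,y)\<in>PiE (J - {j}) P \<times> P j. f (h(j:=y)))"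
    by (rule sum.cartesian_product)
  also have "\<dots> = (\<Sum>g\<in>PiE J P. f g)"
    using assms
    by (intro sum.reindex_bij_witness[of _ "\<lambda>g. (g(j:=undefined), g j)" "\<lambda>(h,y). h(j:=y)"])
       (auto simp: PiE_def extensional_def Pi_def)
  finally show ?thesis by simp
qed

lemma w_01: "w E x y = 0 \<or> w E x y = 1" by (simp add: w_def)
lemma w_ge0: "0 \<le> w E x y" by (simp add: w_def)
lemma w_le1: "w E x y \<le> 1" by (simp add: w_def)

lemma prod_01: "finite S \<Longrightarrow> (\<And>x. x \<in> S \<Longrightarrow> f x = 0 \<or> f x = (1::real)) \<Longrightarrow> prod f S = 0 \<or> prod f S = 1"
proof (induction S rule: finite_induct)
  case (insert x F)
  have "f x = 0 \<or> f x = 1" using insert.prems by simp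
  moreover have "prod f F = 0 \<or> prod f F = 1" using insert by simp
  ultimately show ?case using insert.hyps by auto
qed simp

lemma wset_sym: assumes "\<And>u v. E u v \<Longrightarrow> E v u" shows "wset E U W = wset E W U"
proof -
  have ws: "w E u v = w E v u" for u v unfolding w_def using assms[of u v] assms[of v u] by simp
  show ?thesis unfolding wset_def by (subst sum.swap) (simp add: ws)
qed

lemma density_sym: assumes "\<And>u v. E u v \<Longrightarrow> E v u" shows "density E U W = density E W U"
  unfolding density_def using wset_sym[OF assms, where U=U and W=W] by (simp add: mult.commute)

lemma wset_le: "finite U \<Longrightarrow> finite W \<Longrightarrow> wset E U W \<le> real (card U) * real (card W)"
proof -
  assume "finite U" "finite W"
  have "wset E U W \<le> (\<Sum>u\<in>U. \<Sum>v\<in>W. 1)" unfolding wset_def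
    by (intro sum_mono) (simp add: w_le1)
  then show ?thesis by simp
qed

lemma wset_ge: "0 \<le> wset E U W"
  unfolding wset_def by (intro sum_nonneg) (simp add: w_ge0)

lemma density_01: assumes "finite U" "finite W" shows "0 \<le> density E U W \<and> density E U W \<le> 1"
proof (cases "real (card U) * real (card W) = 0")
  case True
  show ?thesis unfolding density_def True by simp
next
  case False
  then have "card U \<noteq> 0" "card W \<noteq> 0" by auto
  then have pos: "real (card U) * real (card W) > 0" by simp
  have a: "wset E U W \<le> real (card U) * real (card W)" using wset_le[OF assms] .
  have b: "0 \<le> wset E U W" by (rule wset_ge)
  have "wset E U W / (real (card U) * real (card W)) \<le> 1"
    using a pos by (simp add: divide_le_eq_1)
  moreover have "0 \<le> wset E U W / (real (card U) * real (card W))"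
    using b pos by (simp add: divide_nonneg_pos)
  ultimately show ?thesis unfolding density_def by simp
qed

lemma sum_01:
  assumes "finite S" "\<And>x. x \<in> S \<Longrightarrow> A x = 0 \<or> A x = (1::real)"
  shows "(\<Sum>x\<in>S. A x * g x) = (\<Sum>x\<in>{x\<in>S. A x = 1}. g x)"
proof -
  have "(\<Sum>x\<in>S. A x * g x) = (\<Sum>x\<in>S. if A x = 1 then g x else 0)"
    using assms(2) by (intro sum.cong) auto
  also have "\<dots> = (\<Sum>x\<in>{x\<in>S. A x = 1}. g x)"
    using assms(1) by (simp add: sum.inter_filter)
  finally show ?thesis .
qed

lemma factor:
  assumes "p \<noteq> q" "\<forall>(u,v)\<in>G. u \<noteq> v \<and> (u,v) \<noteq> (p,q) \<and> (u,v) \<noteq> (q,p)"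
  shows "(\<Prod>(u,v)\<in>G. w E ((l(p:=x,q:=y)) u) ((l(p:=x,q:=y)) v)) =
    (\<Prod>(u,v)\<in>G. if q = u \<or> q = v then 1 else w E ((l(p:=x)) u) ((l(p:=x)) v)) *
    (\<Prod>(u,v)\<in>G. if q = u \<or> q = v then w E ((l(q:=y)) u) ((l(q:=y)) v) else 1)"
  unfolding prod.distrib[symmetric]
proof (rule prod.cong[OF refl])
  fix z assume z: "z \<in> G"
  obtain u v where uv: "z = (u,v)" by (cases z)
  have h: "u \<noteq> v" "(u,v) \<noteq> (p,q)" "(u,v) \<noteq> (q,p)" using assms(2) z uv by auto
  show "(case z of (u,v) \<Rightarrow> w E ((l(p:=x,q:=y)) u) ((l(p:=x,q:=y)) v)) =
    (case z of (u,v) \<Rightarrow> if q = u \<or> q = v then 1 else w E ((l(p:=x)) u) ((l(p:=x)) v)) *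
    (case z of (u,v) \<Rightarrow> if q = u \<or> q = v then w E ((l(q:=y)) u) ((l(q:=y)) v) else 1)"
  proof (cases "q = u")
    case True
    then have "v \<noteq> p" "v \<noteq> q" using h by auto
    then show ?thesis using True assms(1) uv by simp
  next
    case qu: False
    show ?thesis
    proof (cases "q = v")
      case True
      then have "u \<noteq> p" using h by auto
      then show ?thesis using True qu assms(1) uv by simp
    next
      case False
      then show ?thesis using qu uv by simp
    qed
  qed
qed

locale cl =
  fixes E :: "'v \<Rightarrow> 'v \<Rightarrow> bool" and P :: "nat \<Rightarrow> 'v set" and I :: "nat set" and \<epsilon> :: real
  assumes finI: "finite I" and finP: "\<And>i. i \<in> I \<Longrightarrow> finite (P i)"
  and symE: "\<And>u v. E u v \<Longrightarrow> E v u"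
  and hom: "\<And>i j. i \<in> I \<Longrightarrow> j \<in> I \<Longrightarrow> i \<noteq> j \<Longrightarrow> homogeneous \<epsilon> E (P i) (P j)"
  and eps: "\<epsilon> \<ge> 0"
begin

definition "Pi0 = (\<Prod>i\<in>I. real (card (P i)))"
definition "wg G g = (\<Prod>(u,v)\<in>G. w E (g u) (g v))"
definition "dg G = (\<Prod>(u,v)\<in>G. density E (P u) (P v))"
definition S :: "nat \<Rightarrow> nat \<Rightarrow> ((nat \<Rightarrow> 'v) \<Rightarrow> real) \<Rightarrow> real" where "S a b F = (\<Sum>xa\<in>P a. \<Sum>xb\<in>P b. \<bar>\<Sum>h\<in>PiE (I - {a,b}) P. F (h(a:=xa,b:=xb))\<bar>)"

lemma w_sym: "w E x y = w E y x"
  unfolding w_def using symE[of x y] symE[of y x] by simp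

lemma cardPiE: "J \<subseteq> I \<Longrightarrow> real (card (PiE J P)) = (\<Prod>i\<in>J. real (card (P i)))"
proof -
  assume J: "J \<subseteq> I"
  have "finite J" using finite_subset[OF J finI] .
  then show ?thesis by (simp add: card_PiE)
qed

lemma Pi0_split: "a \<in> I \<Longrightarrow> Pi0 = real (card (P a)) * (\<Prod>i\<in>I - {a}. real (card (P i)))"
  unfolding Pi0_def using finI by (rule prod.remove)

lemma hom_bound:
  assumes "i \<in> I" "j \<in> I" "i \<noteq> j" "X \<subseteq> P i" "Y \<subseteq> P j"
  shows "\<bar>wset E X Y - density E (P i) (P j) * real (card X) * real (card Y)\<bar>
     \<le> \<epsilon> * real (card (P i)) * real (card (P j))"
proof -
  have h: "\<forall>W1 W2. W1 \<subseteq> P i \<longrightarrow> W2 \<subseteq> P j \<longrightarrow>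
        \<bar>wset E W1 W2 - density E (P i) (P j) * real (card W1) * real (card W2)\<bar>
          \<le> \<epsilon> * real (card (P i)) * real (card (P j))"
    using hom[OF assms(1-3)] unfolding homogeneous_def .
  show ?thesis by (rule h[rule_format, OF assms(4,5)])
qed

lemma sum_wset:
  "finite X \<Longrightarrow> finite Y \<Longrightarrow> (\<Sum>x\<in>X. \<Sum>y\<in>Y. w E x y - d) = wset E X Y - d * real (card X) * real (card Y)"
  by (simp add: wset_def sum_subtractf)

lemma sign_split:
  assumes "i \<in> I" "j \<in> I" "i \<noteq> j" "Y \<subseteq> P j"
  shows "(\<Sum>x\<in>P i. \<bar>\<Sum>y\<in>Y. w E x y - density E (P i) (P j)\<bar>) \<le> 2 * \<epsilon> * real (card (P i)) * real (card (P j))"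
proof -
  define d where "d = density E (P i) (P j)"
  define f where "f x = (\<Sum>y\<in>Y. w E x y - d)" for x
  have fi: "finite (P i)" "finite Y" using finP assms finite_subset by blast+
  have "(\<Sum>x\<in>P i. \<bar>f x\<bar>) = (\<Sum>x\<in>P i. if 0 \<le> f x then f x else - f x)"
    by (intro sum.cong) auto
  also have "\<dots> = (\<Sum>x\<in>P i \<inter> {x. 0 \<le> f x}. f x) + (\<Sum>x\<in>P i \<inter> - {x. 0 \<le> f x}. - f x)"
    by (rule sum.If_cases[OF fi(1)])
  also have "\<dots> \<le> \<epsilon> * real (card (P i)) * real (card (P j)) + \<epsilon> * real (card (P i)) * real (card (P j))"
  proof (rule add_mono)
    have "(\<Sum>x\<in>P i \<inter> {x. 0 \<le> f x}. f x) = wset E (P i \<inter> {x. 0 \<le> f x}) Y - d * real (card (P i \<inter> {x. 0 \<le> f x})) * real (card Y)"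
      unfolding f_def using fi by (intro sum_wset) auto
    also have "\<dots> \<le> \<epsilon> * real (card (P i)) * real (card (P j))"
      using hom_bound[OF assms(1-3), of "P i \<inter> {x. 0 \<le> f x}" Y] assms unfolding d_def by auto
    finally show "(\<Sum>x\<in>P i \<inter> {x. 0 \<le> f x}. f x) \<le> \<epsilon> * real (card (P i)) * real (card (P j))" .
    have "(\<Sum>x\<in>P i \<inter> - {x. 0 \<le> f x}. - f x) = - (wset E (P i \<inter> - {x. 0 \<le> f x}) Y - d * real (card (P i \<inter> - {x. 0 \<le> f x})) * real (card Y))"
      unfolding f_def sum_negf using fi by (subst sum_wset) auto
    also have "\<dots> \<le> \<epsilon> * real (card (P i)) * real (card (P j))"
      using hom_bound[OF assms(1-3), of "P i \<inter> - {x. 0 \<le> f x}" Y] assms unfolding d_def by auto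
    finally show "(\<Sum>x\<in>P i \<inter> - {x. 0 \<le> f x}. - f x) \<le> \<epsilon> * real (card (P i)) * real (card (P j))" .
  qed
  finally show ?thesis unfolding f_def d_def by simp
qed

lemma bil:
  assumes "p \<in> I" "q \<in> I" "p \<noteq> q"
    and A: "\<And>x. x \<in> P p \<Longrightarrow> A x = 0 \<or> A x = 1" and B: "\<And>y. y \<in> P q \<Longrightarrow> B y = 0 \<or> B y = 1"
  shows "\<bar>\<Sum>x\<in>P p. \<Sum>y\<in>P q. (w E x y - density E (P p) (P q)) * (A x * B y)\<bar>
      \<le> \<epsilon> * real (card (P p)) * real (card (P q))"
proof -
  define d where "d = density E (P p) (P q)"
  define X where "X = {x\<in>P p. A x = 1}"
  define Y where "Y = {y\<in>P q. B y = 1}"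
  have fi: "finite (P p)" "finite (P q)" using finP assms by auto
  have "(\<Sum>x\<in>P p. \<Sum>y\<in>P q. (w E x y - d) * (A x * B y)) = (\<Sum>x\<in>P p. A x * (\<Sum>y\<in>P q. B y * (w E x y - d)))"
    by (simp add: sum_distrib_left mult_ac)
  also have "\<dots> = (\<Sum>x\<in>X. (\<Sum>y\<in>P q. B y * (w E x y - d)))"
    unfolding X_def using fi(1) A by (rule sum_01)
  also have "\<dots> = (\<Sum>x\<in>X. (\<Sum>y\<in>Y. w E x y - d))"
    unfolding Y_def using fi B by (intro sum.cong refl sum_01) auto
  also have "\<dots> = wset E X Y - d * real (card X) * real (card Y)"
    using fi unfolding X_def Y_def by (intro sum_wset) auto
  finally show ?thesis using hom_bound[OF assms(1-3), of X Y] unfolding X_def Y_def d_def by auto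
qed

lemma sign2:
  assumes "p \<in> I" "q \<in> I" "p \<noteq> q"
    and A: "\<And>x. x \<in> P p \<Longrightarrow> \<bar>A x\<bar> \<le> 1" and B: "\<And>y. y \<in> P q \<Longrightarrow> B y = 0 \<or> B y = 1"
  shows "(\<Sum>x\<in>P p. \<bar>\<Sum>y\<in>P q. (w E x y - density E (P p) (P q)) * (A x * B y)\<bar>)
      \<le> 2 * \<epsilon> * real (card (P p)) * real (card (P q))"
proof -
  define d where "d = density E (P p) (P q)"
  define Y where "Y = {y\<in>P q. B y = 1}"
  have fi: "finite (P p)" "finite (P q)" using finP assms by auto
  have "(\<Sum>x\<in>P p. \<bar>\<Sum>y\<in>P q. (w E x y - d) * (A x * B y)\<bar>) \<le> (\<Sum>x\<in>P p. \<bar>\<Sum>y\<in>Y. w E x y - d\<bar>)"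
  proof (rule sum_mono)
    fix x assume x: "x \<in> P p"
    have "(\<Sum>y\<in>P q. (w E x y - d) * (A x * B y)) = A x * (\<Sum>y\<in>P q. B y * (w E x y - d))"
      by (simp add: sum_distrib_left mult_ac)
    also have "\<dots> = A x * (\<Sum>y\<in>Y. w E x y - d)"
      unfolding Y_def using fi B by (subst sum_01) auto
    finally have "\<bar>\<Sum>y\<in>P q. (w E x y - d) * (A x * B y)\<bar> = \<bar>A x\<bar> * \<bar>\<Sum>y\<in>Y. w E x y - d\<bar>"
      by (simp add: abs_mult)
    also have "\<dots> \<le> \<bar>\<Sum>y\<in>Y. w E x y - d\<bar>"
      using A[OF x] by (simp add: mult_left_le_one_le)
    finally show "\<bar>\<Sum>y\<in>P q. (w E x y - d) * (A x * B y)\<bar> \<le> \<bar>\<Sum>y\<in>Y. w E x y - d\<bar>" .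
  qed
  also have "\<dots> \<le> 2 * \<epsilon> * real (card (P p)) * real (card (P q))"
    unfolding d_def using sign_split[OF assms(1-3), of Y] Y_def by auto
  finally show ?thesis unfolding d_def .
qed


lemma inner_factor:
  assumes "p \<noteq> q" "\<forall>(u,v)\<in>G. u \<noteq> v \<and> (u,v) \<noteq> (p,q) \<and> (u,v) \<noteq> (q,p)"
  shows "(w E ((l(p:=x,q:=y)) p) ((l(p:=x,q:=y)) q) - d) * wg G (l(p:=x,q:=y)) =
    (w E x y - d) * ((\<Prod>(u,v)\<in>G. if q = u \<or> q = v then 1 else w E ((l(p:=x)) u) ((l(p:=x)) v)) *
    (\<Prod>(u,v)\<in>G. if q = u \<or> q = v then w E ((l(q:=y)) u) ((l(q:=y)) v) else 1))"
  unfolding wg_def using factor[OF assms, of E l x y] assms(1) by simp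

lemma A01: "finite G \<Longrightarrow> (\<Prod>(u,v)\<in>G. if q = u \<or> q = v then 1 else w E ((l(p:=x)) u) ((l(p:=x)) v)) = 0 \<or>
   (\<Prod>(u,v)\<in>G. if q = u \<or> q = v then 1 else w E ((l(p:=x)) u) ((l(p:=x)) v)) = 1"
  by (rule prod_01) (auto simp: w_def split: if_splits)

lemma B01: "finite G \<Longrightarrow> (\<Prod>(u,v)\<in>G. if q = u \<or> q = v then w E ((l(q:=y)) u) ((l(q:=y)) v) else 1) = 0 \<or>
   (\<Prod>(u,v)\<in>G. if q = u \<or> q = v then w E ((l(q:=y)) u) ((l(q:=y)) v) else 1) = 1"
  by (rule prod_01) (auto simp: w_def split: if_splits)

lemma abs01: "(x::real) = 0 \<or> x = 1 \<Longrightarrow> \<bar>x\<bar> \<le> 1" by auto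

lemma caseA:
  assumes I: "a \<in> I" "b \<in> I" "p \<in> I" "q \<in> I" and d: "a \<noteq> b" "p \<noteq> q" "p \<notin> {a,b}" "q \<notin> {a,b}"
    and G: "finite G" "\<forall>(u,v)\<in>G. u \<noteq> v \<and> (u,v) \<noteq> (p,q) \<and> (u,v) \<noteq> (q,p)"
  shows "S a b (\<lambda>g. (w E (g p) (g q) - density E (P p) (P q)) * wg G g) \<le> \<epsilon> * Pi0"
proof -
  define d where "d = density E (P p) (P q)"
  define F where "F g = (w E (g p) (g q) - d) * wg G g" for g
  define J where "J = I - {a,b}"
  define K where "K = J - {p} - {q}"
  define c where "c = \<epsilon> * real (card (P p)) * real (card (P q))"
  have pJ: "p \<in> J" and qJ: "q \<in> J - {p}" using I d unfolding J_def by auto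
  have KI: "K \<subseteq> I" unfolding K_def J_def by auto
  have bound: "\<bar>\<Sum>h\<in>PiE J P. F (h(a:=xa,b:=xb))\<bar> \<le> real (card (PiE K P)) * c" for xa xb
  proof -
    have "(\<Sum>h\<in>PiE J P. F (h(a:=xa,b:=xb))) = (\<Sum>h1\<in>PiE (J - {p}) P. \<Sum>x\<in>P p. F (h1(p:=x,a:=xa,b:=xb)))"
      by (rule sum_PiE_split[OF pJ])
    also have "\<dots> = (\<Sum>h2\<in>PiE K P. \<Sum>y\<in>P q. \<Sum>x\<in>P p. F (h2(q:=y,p:=x,a:=xa,b:=xb)))"
      unfolding K_def by (rule sum_PiE_split[OF qJ])
    also have "\<dots> = (\<Sum>h2\<in>PiE K P. \<Sum>x\<in>P p. \<Sum>y\<in>P q. F ((h2(a:=xa,b:=xb))(p:=x,q:=y)))"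
    proof (rule sum.cong[OF refl])
      fix h2 :: "nat \<Rightarrow> 'v" assume "h2 \<in> PiE K P"
      have "h2(q:=y,p:=x,a:=xa,b:=xb) = (h2(a:=xa,b:=xb))(p:=x,q:=y)" for x y
        using d by (auto simp: fun_eq_iff)
      then show "(\<Sum>y\<in>P q. \<Sum>x\<in>P p. F (h2(q:=y,p:=x,a:=xa,b:=xb))) = (\<Sum>x\<in>P p. \<Sum>y\<in>P q. F ((h2(a:=xa,b:=xb))(p:=x,q:=y)))"
        by (simp add: sum.swap[of _ "P q"])
    qed
    finally have eq: "(\<Sum>h\<in>PiE J P. F (h(a:=xa,b:=xb))) = (\<Sum>h2\<in>PiE K P. \<Sum>x\<in>P p. \<Sum>y\<in>P q. F ((h2(a:=xa,b:=xb))(p:=x,q:=y)))" .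
    have that: "\<bar>\<Sum>x\<in>P p. \<Sum>y\<in>P q. F ((h2(a:=xa,b:=xb))(p:=x,q:=y))\<bar> \<le> c" for h2 :: "nat \<Rightarrow> 'v"
    proof -
      define l where "l = h2(a:=xa,b:=xb)"
      show ?thesis
        unfolding l_def[symmetric] F_def inner_factor[OF d(2) G(2)] c_def d_def
        using I d A01[OF G(1)] B01[OF G(1)] by (intro bil) auto
    qed
    have "\<bar>\<Sum>h2\<in>PiE K P. \<Sum>x\<in>P p. \<Sum>y\<in>P q. F ((h2(a:=xa,b:=xb))(p:=x,q:=y))\<bar> \<le> (\<Sum>h2\<in>PiE K P. c)"
      by (rule order.trans[OF sum_abs], rule sum_mono) (rule that)
    then show ?thesis unfolding eq by simp
  qed
  have "S a b F \<le> (\<Sum>xa\<in>P a. \<Sum>xb\<in>P b. real (card (PiE K P)) * c)"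
    unfolding S_def J_def[symmetric] by (intro sum_mono bound)
  also have "\<dots> = \<epsilon> * Pi0"
  proof -
    have f: "finite (I - {a})" "finite (I - {a} - {b})" "finite (I - {a} - {b} - {p})" using finI by auto
    have "Pi0 = real (card (P a)) * (real (card (P b)) * (real (card (P p)) * (real (card (P q)) *
       (\<Prod>i\<in>I - {a} - {b} - {p} - {q}. real (card (P i))))))"
      using I d
      by (simp add: Pi0_split[of a] prod.remove[OF f(1), of b] prod.remove[OF f(2), of p] prod.remove[OF f(3), of q])
    moreover have "I - {a} - {b} - {p} - {q} = K" unfolding K_def J_def by auto
    ultimately show ?thesis using cardPiE[OF KI] unfolding c_def by (simp add: mult_ac)
  qed
  finally show ?thesis unfolding F_def d_def .
qed

lemma caseB:
  assumes I: "a \<in> I" "b \<in> I" "q \<in> I" and d: "a \<noteq> b" "q \<notin> {a,b}"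
    and G: "finite G" "\<forall>(u,v)\<in>G. u \<noteq> v \<and> (u,v) \<noteq> (a,q) \<and> (u,v) \<noteq> (q,a)"
  shows "S a b (\<lambda>g. (w E (g a) (g q) - density E (P a) (P q)) * wg G g) \<le> 2 * \<epsilon> * Pi0"
proof -
  define d where "d = density E (P a) (P q)"
  define F where "F g = (w E (g a) (g q) - d) * wg G g" for g
  define J where "J = I - {a,b}"
  define K where "K = J - {q}"
  define c where "c = 2 * \<epsilon> * real (card (P a)) * real (card (P q))"
  have qJ: "q \<in> J" using I d unfolding J_def by auto
  have KI: "K \<subseteq> I" unfolding K_def J_def by auto
  have aq: "a \<noteq> q" using d by auto
  have "S a b F = (\<Sum>xa\<in>P a. \<Sum>xb\<in>P b. \<bar>\<Sum>h2\<in>PiE K P. \<Sum>y\<in>P q. F (h2(q:=y,a:=xa,b:=xb))\<bar>)"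
    unfolding S_def J_def[symmetric] K_def by (simp add: sum_PiE_split[OF qJ])
  also have "\<dots> \<le> (\<Sum>xa\<in>P a. \<Sum>xb\<in>P b. \<Sum>h2\<in>PiE K P. \<bar>\<Sum>y\<in>P q. F (h2(q:=y,a:=xa,b:=xb))\<bar>)"
    by (intro sum_mono sum_abs)
  also have "\<dots> = (\<Sum>xb\<in>P b. \<Sum>h2\<in>PiE K P. \<Sum>xa\<in>P a. \<bar>\<Sum>y\<in>P q. F ((h2(b:=xb))(a:=xa,q:=y))\<bar>)"
  proof -
    have e: "h2(q:=y,a:=xa,b:=xb) = (h2(b:=xb))(a:=xa,q:=y)" for h2 :: "nat \<Rightarrow> 'v" and xa xb y
      using d by (auto simp: fun_eq_iff)
    have "(\<Sum>xa\<in>P a. \<Sum>xb\<in>P b. \<Sum>h2\<in>PiE K P. \<bar>\<Sum>y\<in>P q. F (h2(q:=y,a:=xa,b:=xb))\<bar>)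
      = (\<Sum>xb\<in>P b. \<Sum>xa\<in>P a. \<Sum>h2\<in>PiE K P. \<bar>\<Sum>y\<in>P q. F (h2(q:=y,a:=xa,b:=xb))\<bar>)"
      by (rule sum.swap)
    also have "\<dots> = (\<Sum>xb\<in>P b. \<Sum>h2\<in>PiE K P. \<Sum>xa\<in>P a. \<bar>\<Sum>y\<in>P q. F (h2(q:=y,a:=xa,b:=xb))\<bar>)"
      by (intro sum.cong refl sum.swap)
    finally show ?thesis unfolding e .
  qed
  also have "\<dots> \<le> (\<Sum>xb\<in>P b. \<Sum>h2\<in>PiE K P. c)"
  proof (intro sum_mono)
    fix xb and h2 :: "nat \<Rightarrow> 'v"
    define l where "l = h2(b:=xb)"
    show "(\<Sum>xa\<in>P a. \<bar>\<Sum>y\<in>P q. F ((h2(b:=xb))(a:=xa,q:=y))\<bar>) \<le> c"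
      unfolding l_def[symmetric] F_def inner_factor[OF aq G(2)] c_def d_def
      using I d by (intro sign2 abs01 A01 B01 G(1)) auto
  qed
  also have "\<dots> = 2 * \<epsilon> * Pi0"
  proof -
    have f: "finite (I - {a})" "finite (I - {a} - {b})" using finI by auto
    have "Pi0 = real (card (P a)) * (real (card (P b)) * (real (card (P q)) *
       (\<Prod>i\<in>I - {a} - {b} - {q}. real (card (P i)))))"
      using I d
      by (simp add: Pi0_split[of a] prod.remove[OF f(1), of b] prod.remove[OF f(2), of q])
    moreover have "I - {a} - {b} - {q} = K" unfolding K_def J_def by auto
    ultimately show ?thesis using cardPiE[OF KI] unfolding c_def by (simp add: mult_ac)
  qed
  finally show ?thesis unfolding F_def d_def .
qed


lemma S_swap: "a \<noteq> b \<Longrightarrow> S a b F = S b a F"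
  unfolding S_def
  by (subst sum.swap) (simp add: insert_commute fun_upd_twist)

lemma S_add: "S a b (\<lambda>g. F g + F' g) \<le> S a b F + S a b F'"
proof -
  have "\<bar>\<Sum>h\<in>X. F (h(a:=xa,b:=xb)) + F' (h(a:=xa,b:=xb))\<bar> \<le> \<bar>\<Sum>h\<in>X. F (h(a:=xa,b:=xb))\<bar> + \<bar>\<Sum>h\<in>X. F' (h(a:=xa,b:=xb))\<bar>" for X xa xb
    unfolding sum.distrib by (rule abs_triangle_ineq)
  then show ?thesis unfolding S_def sum.distrib[symmetric] by (intro sum_mono)
qed

lemma S_scale: "c \<ge> 0 \<Longrightarrow> S a b (\<lambda>g. c * F g) = c * S a b F"
proof -
  assume c: "c \<ge> 0"
  have "\<bar>\<Sum>h\<in>X. c * F (h(a:=xa,b:=xb))\<bar> = c * \<bar>\<Sum>h\<in>X. F (h(a:=xa,b:=xb))\<bar>" for X xa xb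
    using c by (simp add: sum_distrib_left[symmetric] abs_mult)
  then show ?thesis unfolding S_def by (simp add: sum_distrib_left)
qed

lemma S_nonneg: "0 \<le> S a b F"
  unfolding S_def by (intro sum_nonneg abs_ge_zero)

lemma Pi0_nonneg: "0 \<le> Pi0"
  unfolding Pi0_def by (intro prod_nonneg) auto

lemma edge:
  assumes I: "a \<in> I" "b \<in> I" "s \<in> I" "t \<in> I" and d: "a \<noteq> b" "s \<noteq> t" "(s,t) \<noteq> (a,b)" "(s,t) \<noteq> (b,a)"
    and G: "finite G" "\<forall>(u,v)\<in>G. u \<noteq> v \<and> (u,v) \<noteq> (s,t) \<and> (u,v) \<noteq> (t,s)"
  shows "S a b (\<lambda>g. (w E (g s) (g t) - density E (P s) (P t)) * wg G g) \<le> 2 * \<epsilon> * Pi0"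
proof -
  have flip: "(\<lambda>g. (w E (g s) (g t) - density E (P s) (P t)) * wg G g) = (\<lambda>g. (w E (g t) (g s) - density E (P t) (P s)) * wg G g)"
    using symE by (simp add: w_sym[of "g s" for g] density_sym[of E])
  have G': "\<forall>(u,v)\<in>G. u \<noteq> v \<and> (u,v) \<noteq> (t,s) \<and> (u,v) \<noteq> (s,t)" using G(2) by auto
  consider "s \<notin> {a,b}" "t \<notin> {a,b}" | "s = a" | "s = b" | "t = a" | "t = b" by auto
  then show ?thesis
  proof cases
    case 1
    have "S a b (\<lambda>g. (w E (g s) (g t) - density E (P s) (P t)) * wg G g) \<le> \<epsilon> * Pi0"
      using 1 I d G by (intro caseA) auto
    also have "\<dots> \<le> 2 * \<epsilon> * Pi0" using eps Pi0_nonneg by (simp add: mult_right_mono)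
    finally show ?thesis .
  next
    case 2
    then show ?thesis using I d G caseB[of a b t G] by auto
  next
    case 3
    then show ?thesis using I d G caseB[of b a t G] S_swap[of a b] by auto
  next
    case 4
    have "S a b (\<lambda>g. (w E (g a) (g s) - density E (P a) (P s)) * wg G g) \<le> 2 * \<epsilon> * Pi0"
      by (rule caseB) (use I d G G' 4 in auto)
    then show ?thesis using flip 4 by simp
  next
    case 5
    have "S b a (\<lambda>g. (w E (g b) (g s) - density E (P b) (P s)) * wg G g) \<le> 2 * \<epsilon> * Pi0"
      by (rule caseB) (use I d G G' 5 in auto)
    then show ?thesis using flip 5 S_swap[OF d(1)] by simp
  qed
qed

lemma main_bound:
  assumes I: "a \<in> I" "b \<in> I" and ab: "a < b" and G: "finite G"
    and GI: "\<forall>(s,t)\<in>G. s \<in> I \<and> t \<in> I \<and> s < t \<and> (s,t) \<noteq> (a,b)"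
  shows "S a b (\<lambda>g. wg G g - dg G) \<le> 2 * \<epsilon> * real (card G) * Pi0"
  using G GI
proof (induction G rule: finite_induct)
  case empty
  then show ?case by (simp add: S_def wg_def dg_def)
next
  case (insert x G0)
  obtain s t where x: "x = (s,t)" by (cases x)
  have st: "s \<in> I" "t \<in> I" "s < t" "(s,t) \<noteq> (a,b)" using insert.prems x by auto
  define dd where "dd = density E (P s) (P t)"
  have dd01: "0 \<le> dd" "dd \<le> 1" unfolding dd_def using density_01 finP st by auto
  have eq: "wg (insert x G0) g - dg (insert x G0) = (w E (g s) (g t) - dd) * wg G0 g + dd * (wg G0 g - dg G0)" for g
    unfolding wg_def dg_def x dd_def using insert.hyps x by (simp add: algebra_simps)
  have "S a b (\<lambda>g. wg (insert x G0) g - dg (insert x G0)) \<le>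
      S a b (\<lambda>g. (w E (g s) (g t) - dd) * wg G0 g) + S a b (\<lambda>g. dd * (wg G0 g - dg G0))"
    unfolding eq by (rule S_add)
  also have "\<dots> \<le> 2 * \<epsilon> * Pi0 + 2 * \<epsilon> * real (card G0) * Pi0"
  proof (rule add_mono)
    show "S a b (\<lambda>g. (w E (g s) (g t) - dd) * wg G0 g) \<le> 2 * \<epsilon> * Pi0"
      unfolding dd_def using I st ab insert.hyps insert.prems x
      by (intro edge) auto
    have "S a b (\<lambda>g. dd * (wg G0 g - dg G0)) = dd * S a b (\<lambda>g. wg G0 g - dg G0)"
      by (rule S_scale[OF dd01(1)])
    also have "\<dots> \<le> S a b (\<lambda>g. wg G0 g - dg G0)"
      using dd01 S_nonneg by (simp add: mult_left_le_one_le)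
    also have "\<dots> \<le> 2 * \<epsilon> * real (card G0) * Pi0"
      using insert.IH insert.prems by auto
    finally show "S a b (\<lambda>g. dd * (wg G0 g - dg G0)) \<le> 2 * \<epsilon> * real (card G0) * Pi0" .
  qed
  also have "\<dots> = 2 * \<epsilon> * real (card (insert x G0)) * Pi0"
    using insert.hyps by (simp add: algebra_simps)
  finally show ?case .
qed

end

lemma sum_fix2:
  assumes "a \<noteq> b" "a \<in> I" "b \<in> I" "xa \<in> P a" "xb \<in> P b"
  shows "(\<Sum>g\<in>{g\<in>PiE I P. g a = xa \<and> g b = xb}. f g) = (\<Sum>h\<in>PiE (I - {a,b}) P. f (h(a:=xa,b:=xb)))"
  using assms
  by (intro sum.reindex_bij_witness[of _ "\<lambda>h. h(a:=xa,b:=xb)" "\<lambda>g. g(a:=undefined, b:=undefined)"])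
     (auto simp: PiE_def extensional_def Pi_def)

theorem lemma40:
  fixes V :: "'v set" and E :: "'v \<Rightarrow> 'v \<Rightarrow> bool" and \<epsilon> :: real
    and k :: nat and P :: "nat \<Rightarrow> 'v set" and F :: "(nat \<times> nat) set" and a b :: nat
  assumes "graph V E"
    and "regular_partition \<epsilon> k P V E"
    and "graph_on k F"
    and "(a, b) \<in> F"
  shows "real (card {(xa, xb) \<in> P a \<times> P b.
            \<not> \<bar>(\<Sum>g\<in>{g \<in> Pmaps k P. g a = xa \<and> g b = xb}. homg F E g)
                - (\<Prod>i\<in>{1..k} - {a, b}. real (card (P i))) *
                  (w E xa xb * (\<Prod>(i,j)\<in>F - {(a,b)}. density E (P i) (P j)))\<bar>
              \<le> (\<Prod>i\<in>{1..k} - {a, b}. real (card (P i))) * (sqrt \<epsilon> * real (card F))})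
         \<le> 2 * real k * sqrt \<epsilon> * real (card (P a)) * real (card (P b))"
proof -
  define I where "I = {1..k}"
  define B where "B = {(xa, xb) \<in> P a \<times> P b.
            \<not> \<bar>(\<Sum>g\<in>{g \<in> Pmaps k P. g a = xa \<and> g b = xb}. homg F E g)
                - (\<Prod>i\<in>{1..k} - {a, b}. real (card (P i))) *
                  (w E xa xb * (\<Prod>(i,j)\<in>F - {(a,b)}. density E (P i) (P j)))\<bar>
              \<le> (\<Prod>i\<in>{1..k} - {a, b}. real (card (P i))) * (sqrt \<epsilon> * real (card F))}"
  have gr: "finite V" "\<And>u v. E u v \<Longrightarrow> E v u" using assms(1) unfolding graph_def by auto
  have rp: "(\<Union>i\<in>I. P i) = V" "\<And>i j. i \<in> I \<Longrightarrow> j \<in> I \<Longrightarrow> i \<noteq> j \<Longrightarrow> homogeneous \<epsilon> E (P i) (P j)"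
    using assms(2) unfolding regular_partition_def I_def by auto
  have FI: "F \<subseteq> {(i,j). 1 \<le> i \<and> i < j \<and> j \<le> k}" using assms(3) unfolding graph_on_def .
  have ab: "a \<in> I" "b \<in> I" "a < b" using FI assms(4) unfolding I_def by auto
  have finP: "finite (P i)" if "i \<in> I" for i
    using rp(1) gr(1) that by (metis UN_upper finite_subset)
  have finF: "finite F" by (rule finite_subset[OF FI]) (auto intro: finite_subset[of _ "{1..k} \<times> {1..k}"])
  have Bsub: "B \<subseteq> P a \<times> P b" unfolding B_def by auto
  show ?thesis
  proof (cases "P a = {} \<or> P b = {}")
    case True
    then have "B = {}" using Bsub by auto
    then show ?thesis unfolding B_def[symmetric] using True by auto
  next
    case False
    then have cards: "card (P a) > 0" "card (P b) > 0" using finP ab by (auto simp: card_gt_0_iff)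
    have eps: "\<epsilon> \<ge> 0"
    proof -
      have "\<bar>wset E {} {} - density E (P a) (P b) * real (card ({}::'v set)) * real (card ({}::'v set))\<bar>
         \<le> \<epsilon> * real (card (P a)) * real (card (P b))"
        using rp(2)[OF ab(1,2)] ab unfolding homogeneous_def by blast
      then have "0 \<le> \<epsilon> * (real (card (P a)) * real (card (P b)))" by (simp add: mult.assoc)
      moreover have "0 < real (card (P a)) * real (card (P b))" using cards by simp
      ultimately show ?thesis by (simp add: zero_le_mult_iff)
    qed
    interpret cl E P I \<epsilon>
      using finP gr(2) rp(2) eps by unfold_locales (auto simp: I_def)

    define J where "J = I - {a,b}"
    define Q where "Q = (\<Prod>i\<in>{1..k} - {a, b}. real (card (P i)))"
    define F' where "F' = F - {(a,b)}"
    have JI: "J \<subseteq> I" unfolding J_def by auto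
    have Q: "Q = real (card (PiE J P))" unfolding Q_def using cardPiE[OF JI] by (simp add: J_def I_def)
    have dgF: "(\<Prod>(i,j)\<in>F - {(a,b)}. density E (P i) (P j)) = dg F'" by (simp add: dg_def F'_def)
    define T where "T xa xb = \<bar>\<Sum>h\<in>PiE J P. wg F' (h(a:=xa,b:=xb)) - dg F'\<bar>" for xa xb
    have per: "\<bar>(\<Sum>g\<in>{g \<in> Pmaps k P. g a = xa \<and> g b = xb}. homg F E g) - Q * (w E xa xb * dg F')\<bar> \<le> T xa xb"
      if xab: "xa \<in> P a" "xb \<in> P b" for xa xb
    proof -
      have s1: "(\<Sum>g\<in>{g \<in> Pmaps k P. g a = xa \<and> g b = xb}. homg F E g) = (\<Sum>h\<in>PiE J P. homg F E (h(a:=xa,b:=xb)))"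
        unfolding Pmaps_def I_def[symmetric] J_def using ab xab by (intro sum_fix2) auto
      have s2: "homg F E (h(a:=xa,b:=xb)) = w E xa xb * wg F' (h(a:=xa,b:=xb))" for h :: "nat \<Rightarrow> 'v"
        unfolding homg_def wg_def F'_def using prod.remove[OF finF assms(4), of "\<lambda>(i,j). w E ((h(a:=xa,b:=xb)) i) ((h(a:=xa,b:=xb)) j)"] ab
        by simp
      have "(\<Sum>g\<in>{g \<in> Pmaps k P. g a = xa \<and> g b = xb}. homg F E g) - Q * (w E xa xb * dg F')
          = w E xa xb * (\<Sum>h\<in>PiE J P. wg F' (h(a:=xa,b:=xb)) - dg F')"
        unfolding s1 s2 Q by (simp add: sum_distrib_left sum_subtractf algebra_simps)
      then have "\<bar>(\<Sum>g\<in>{g \<in> Pmaps k P. g a = xa \<and> g b = xb}. homg F E g) - Q * (w E xa xb * dg F')\<bar>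
          = \<bar>w E xa xb\<bar> * T xa xb" unfolding T_def by (simp add: abs_mult)
      also have "\<dots> \<le> T xa xb" using w_le1[of E xa xb] w_ge0[of E xa xb] unfolding T_def
        by (simp add: mult_left_le_one_le)
      finally show ?thesis .
    qed
    have Ssum: "(\<Sum>z\<in>P a \<times> P b. T (fst z) (snd z)) = S a b (\<lambda>g. wg F' g - dg F')"
      unfolding S_def T_def J_def by (simp add: sum.cartesian_product split_def)
    have F'cond: "\<forall>(s,t)\<in>F'. s \<in> I \<and> t \<in> I \<and> s < t \<and> (s,t) \<noteq> (a,b)"
      using FI unfolding F'_def I_def by auto
    have finF': "finite F'" using finF unfolding F'_def by auto
    have mb: "S a b (\<lambda>g. wg F' g - dg F') \<le> 2 * \<epsilon> * real (card F') * Pi0"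
      by (rule main_bound[OF ab finF' F'cond])
    have cF: "real (card F') \<le> real (card F)" unfolding F'_def using finF by (simp add: card_mono)
    have Pi0eq: "Pi0 = real (card (P a)) * real (card (P b)) * Q"
    proof -
      have f: "finite (I - {a})" using finI by auto
      have "I - {a} - {b} = {1..k} - {a,b}" unfolding I_def by auto
      then show ?thesis unfolding Q_def using ab
        by (simp add: Pi0_split[of a] prod.remove[OF f, of b])
    qed
    have Pi0_nn: "0 \<le> Pi0" by (rule Pi0_nonneg)
    have Qnn: "0 \<le> Q" unfolding Q_def by (intro prod_nonneg) auto
    define c where "c = Q * (sqrt \<epsilon> * real (card F))"
    have cnn: "0 \<le> c" unfolding c_def using Qnn eps by simp
    have Bbad: "T (fst z) (snd z) > c" if "z \<in> B" for z
      using that per unfolding B_def c_def Q_def[symmetric] dgF by fastforce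
    have Tnn: "0 \<le> T x y" for x y unfolding T_def by simp
    have finPab: "finite (P a \<times> P b)" using finP ab by auto
    have finB: "finite B" using finite_subset[OF Bsub finPab] .
    have ee: "\<epsilon> = sqrt \<epsilon> * sqrt \<epsilon>" using eps by simp
    have k1: "1 \<le> real k" using ab unfolding I_def by auto
    show ?thesis
    proof (cases "B = {}")
      case True
      then show ?thesis unfolding B_def[symmetric] using eps by simp
    next
      case Bne: False
      have "real (card B) * c = (\<Sum>z\<in>B. c)" by simp
      also have "\<dots> < (\<Sum>z\<in>B. T (fst z) (snd z))"
        using finB Bne Bbad by (intro sum_strict_mono) auto
      also have "\<dots> \<le> (\<Sum>z\<in>P a \<times> P b. T (fst z) (snd z))"
        using finPab Bsub Tnn by (intro sum_mono2) auto
      also have "\<dots> \<le> 2 * \<epsilon> * real (card F') * Pi0" using Ssum mb by simp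
      also have "\<dots> \<le> 2 * \<epsilon> * real (card F) * Pi0"
        using cF eps Pi0_nn by (intro mult_right_mono mult_left_mono) auto
      also have "\<dots> = (2 * sqrt \<epsilon> * real (card (P a)) * real (card (P b))) * c"
        unfolding c_def Pi0eq by (subst ee) (simp add: algebra_simps)
      finally have lt: "real (card B) * c < (2 * sqrt \<epsilon> * real (card (P a)) * real (card (P b))) * c" .
      then have "c > 0" using cnn by (cases "c = 0") auto
      then have "real (card B) < 2 * sqrt \<epsilon> * real (card (P a)) * real (card (P b))"
        using lt by simp
      also have "\<dots> \<le> 2 * real k * sqrt \<epsilon> * real (card (P a)) * real (card (P b))"
      proof -
        have "0 \<le> 2 * sqrt \<epsilon> * real (card (P a)) * real (card (P b))" using eps by simp
        then have "1 * (2 * sqrt \<epsilon> * real (card (P a)) * real (card (P b))) \<le> real k * (2 * sqrt \<epsilon> * real (card (P a)) * real (card (P b)))"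
          using k1 by (intro mult_right_mono) auto
        then show ?thesis by (simp add: algebra_simps)
      qed
      finally show ?thesis unfolding B_def[symmetric] by simp
    qed
  qed
qed

end
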